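(* Let $X$ be a space, $Y\subseteq X$ a subspace and $\tau$ a cardinal. Then $Y$ is $F_\tau$-embedded in $X$ if one of the following holds: (a) $X$ is a normal $T_1$-space, $\tau\geq\aleph_0$ and $nw(Y)\leq\tau$; (b) $Y$ is preopen in $X$ (i.e., $Y\subseteq \mathrm{int}_X(\mathrm{cl}_X(Y))$) and there is a family $\alpha$ of open subsets of $Y$ which is the union of $\tau$ strongly point-finite families and which F-separates $Y$ (in the space $Y$).
   Context: "Space" means topological $T_0$-space. $nw(Y)$ is the network weight of $Y$. A family of subsets of a set is strongly point-finite if every countably infinite subfamily contains a finite subfamily with empty intersection. A family $\mathcal{U}$ of subsets of a space $W$ F-separates $S\subseteq W$ if for distinct $x,y\in S$ there is $U\in\mathcal{U}$ with $x\in U$ and $y\notin\mathrm{cl}_W(U)$, or vice versa. $Y$ is $F_\tau$-embedded in $X$ if there is a family of open subsets of $X$ which is the union of $\tau$ point-finite families of open subsets of $X$ and which F-separates $Y$ (closures taken in $X$). *)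

theory Defs
  imports "HOL-Analysis.Analysis"
begin

definition point_finite :: "'a topology \<Rightarrow> 'a set set \<Rightarrow> bool" where
  "point_finite X \<U> \<longleftrightarrow> (\<forall>x \<in> topspace X. finite {U \<in> \<U>. x \<in> U})"

definition strongly_point_finite :: "'a set set \<Rightarrow> bool" where
  "strongly_point_finite \<U> \<longleftrightarrow>
     (\<forall>\<C> \<subseteq> \<U>. countable \<C> \<and> infinite \<C> \<longrightarrow> (\<exists>\<F> \<subseteq> \<C>. finite \<F> \<and> \<Inter>\<F> = {}))"

definition F_separates :: "'a topology \<Rightarrow> 'a set set \<Rightarrow> 'a set \<Rightarrow> bool" where
  "F_separates W \<U> S \<longleftrightarrow>
     (\<forall>x \<in> S. \<forall>y \<in> S. x \<noteq> y \<longrightarrow>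
        (\<exists>U \<in> \<U>. (x \<in> U \<and> y \<notin> W closure_of U) \<or> (y \<in> U \<and> x \<notin> W closure_of U)))"

text \<open>Y is F_tau-embedded in X, the cardinal tau being the cardinality of the index set T.\<close>
definition F_tau_embedded :: "'a topology \<Rightarrow> 'a set \<Rightarrow> 'i set \<Rightarrow> bool" where
  "F_tau_embedded X Y T \<longleftrightarrow>
     (\<exists>\<A> :: 'i \<Rightarrow> 'a set set.
        (\<forall>i \<in> T. (\<forall>U \<in> \<A> i. openin X U) \<and> point_finite X (\<A> i)) \<and>
        F_separates X (\<Union>i \<in> T. \<A> i) Y)"

definition network :: "'a topology \<Rightarrow> 'a set set \<Rightarrow> bool" where
  "network Y \<N> \<longleftrightarrow> (\<forall>N \<in> \<N>. N \<subseteq> topspace Y) \<and>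
     (\<forall>U x. openin Y U \<and> x \<in> U \<longrightarrow> (\<exists>N \<in> \<N>. x \<in> N \<and> N \<subseteq> U))"

definition nw_le :: "'a topology \<Rightarrow> 'i set \<Rightarrow> bool" where
  "nw_le Y T \<longleftrightarrow> (\<exists>\<N>. network Y \<N> \<and> (card_of \<N>, card_of T) \<in> ordLeq)"

definition preopen :: "'a topology \<Rightarrow> 'a set \<Rightarrow> bool" where
  "preopen X Y \<longleftrightarrow> Y \<subseteq> X interior_of (X closure_of Y)"

end

theory Submission
  imports Defs
begin

lemma caseb:
  fixes X :: "'a topology" and Y :: "'a set" and T :: "'i set"
  assumes Ysub: "Y \<subseteq> topspace X" and pre: "preopen X Y"
    and al: "\<forall>i \<in> T. (\<forall>U \<in> \<alpha> i. openin (subtopology X Y) U) \<and> strongly_point_finite (\<alpha> i)"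
    and sep: "F_separates (subtopology X Y) (\<Union>i \<in> T. \<alpha> i) Y"
  shows "F_tau_embedded X Y T"
proof -
  define G where "G = X interior_of (X closure_of Y)"
  have YG: "Y \<subseteq> G" using pre unfolding preopen_def G_def .
  have Gcl: "G \<subseteq> X closure_of Y" unfolding G_def by (rule interior_of_subset)
  define e where "e U = G - X closure_of (Y - U)" for U
  have eopen: "openin X (e U)" for U
    unfolding e_def G_def by (intro openin_diff openin_interior_of closedin_closure_of)
  have eG: "e U \<subseteq> G" for U unfolding e_def by auto
  have eY: "e U \<inter> Y \<subseteq> U" for U
  proof
    fix y assume "y \<in> e U \<inter> Y"
    then show "y \<in> U" unfolding e_def using Ysub closure_of_subset[of "Y - U" X] by auto
  qed
  have Ue: "U \<subseteq> e U" if "openin (subtopology X Y) U" for U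
  proof
    fix y assume yU: "y \<in> U"
    from that obtain Op where Op: "openin X Op" "U = Op \<inter> Y" by (auto simp: openin_subtopology)
    have "y \<notin> X closure_of (Y - U)"
    proof
      assume "y \<in> X closure_of (Y - U)"
      then obtain z where "z \<in> Y - U" "z \<in> Op" using Op yU unfolding in_closure_of by blast
      then show False using Op by auto
    qed
    then show "y \<in> e U" unfolding e_def using yU YG Op by auto
  qed
  have meet: "\<exists>w\<in>Y. w \<in> V" if "openin X V" "V \<subseteq> G" "x \<in> V" for V x
  proof -
    have "x \<in> X closure_of Y" using that Gcl by auto
    then show ?thesis using that unfolding in_closure_of by blast
  qed
  define A where "A i = e ` \<alpha> i" for i
  show ?thesis unfolding F_tau_embedded_def
  proof (intro exI[of _ A] conjI ballI)
    fix i assume iT: "i \<in> T"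
    show "openin X V" if "V \<in> A i" for V using that eopen unfolding A_def by auto
    show "point_finite X (A i)" unfolding point_finite_def
    proof
      fix x assume "x \<in> topspace X"
      have "finite {U \<in> \<alpha> i. x \<in> e U}"
      proof (rule ccontr)
        assume "infinite {U \<in> \<alpha> i. x \<in> e U}"
        then obtain C where C: "C \<subseteq> {U \<in> \<alpha> i. x \<in> e U}" "countable C" "infinite C"
          using infinite_countable_subset' by blast
        have spf: "strongly_point_finite (\<alpha> i)" using al iT by blast
        have "C \<subseteq> \<alpha> i" using C(1) by blast
        then obtain F where F: "F \<subseteq> C" "finite F" "\<Inter>F = {}"
          using spf C(2,3) unfolding strongly_point_finite_def by meson
        have Fne: "F \<noteq> {}" using F by auto
        have "openin X (\<Inter>(e ` F))"
          using F Fne eopen by (intro openin_Inter) auto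
        moreover have "\<Inter>(e ` F) \<subseteq> G" using Fne eG by auto
        moreover have "x \<in> \<Inter>(e ` F)" using F C by auto
        ultimately obtain w where "w \<in> Y" "w \<in> \<Inter>(e ` F)" using meet by blast
        then have "w \<in> \<Inter>F" using eY by blast
        then show False using F by auto
      qed
      then have "finite (e ` {U \<in> \<alpha> i. x \<in> e U})" by simp
      moreover have "{V \<in> A i. x \<in> V} \<subseteq> e ` {U \<in> \<alpha> i. x \<in> e U}" unfolding A_def by auto
      ultimately show "finite {V \<in> A i. x \<in> V}" by (rule finite_subset[rotated])
    qed
  next
    have key: "\<exists>V\<in>(\<Union>i\<in>T. A i). x \<in> V \<and> y \<notin> X closure_of V"
      if H: "U \<in> (\<Union>i\<in>T. \<alpha> i)" "x \<in> U" "y \<in> Y" "y \<notin> subtopology X Y closure_of U" for x y U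
    proof -
      obtain i where i: "i \<in> T" "U \<in> \<alpha> i" using H(1) by auto
      have Uo: "openin (subtopology X Y) U" using al i by auto
      have "y \<notin> X closure_of (e U)"
      proof
        assume yc: "y \<in> X closure_of (e U)"
        have "y \<in> X closure_of U" unfolding in_closure_of
        proof (intro conjI allI impI)
          show "y \<in> topspace X" using yc closure_of_subset_topspace by fastforce
          fix W assume W: "y \<in> W \<and> openin X W"
          then obtain z where z: "z \<in> e U" "z \<in> W" using yc unfolding in_closure_of by blast
          have "openin X (W \<inter> e U)" using W eopen by auto
          then obtain w where "w \<in> Y" "w \<in> W \<inter> e U" using meet[of "W \<inter> e U" z] z eG by blast
          then show "\<exists>w. w \<in> U \<and> w \<in> W" using eY by blast
        qed
        moreover have "U \<subseteq> Y" using Uo openin_subset by fastforce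
        ultimately have "y \<in> subtopology X Y closure_of U"
          using H(3) by (simp add: closure_of_subtopology Int_absorb1)
        then show False using H(4) by blast
      qed
      moreover have "e U \<in> A i" unfolding A_def using i by auto
      ultimately show ?thesis using i Ue[OF Uo] H(2) by blast
    qed
    show "F_separates X (\<Union>i\<in>T. A i) Y" unfolding F_separates_def
    proof (intro ballI impI)
      fix x y assume xy: "x \<in> Y" "y \<in> Y" "x \<noteq> y"
      then obtain U where U: "U \<in> (\<Union>i\<in>T. \<alpha> i)"
        "(x \<in> U \<and> y \<notin> subtopology X Y closure_of U) \<or> (y \<in> U \<and> x \<notin> subtopology X Y closure_of U)"
        using sep unfolding F_separates_def by blast
      then show "\<exists>V\<in>(\<Union>i\<in>T. A i). x \<in> V \<and> y \<notin> X closure_of V \<or> y \<in> V \<and> x \<notin> X closure_of V"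
        using key[of U x y] key[of U y x] xy by blast
    qed
  qed
qed

lemma casea:
  fixes X :: "'a topology" and Y :: "'a set" and T :: "'i set"
  assumes Ysub: "Y \<subseteq> topspace X" and nor: "normal_space X" and t1: "t1_space X"
    and infT: "infinite T" and nw: "nw_le (subtopology X Y) T"
  shows "F_tau_embedded X Y T"
proof -
  obtain N where net: "network (subtopology X Y) N" and cN: "(card_of N, card_of T) \<in> ordLeq"
    using nw unfolding nw_le_def by blast
  define Q where "Q p U \<longleftrightarrow> openin X U \<and> X closure_of (fst p) \<subseteq> U
      \<and> disjnt (X closure_of U) (X closure_of (snd p))" for p U
  define W where "W p = (SOME U. Q p U)" for p
  have NY: "N1 \<subseteq> Y" if "N1 \<in> N" for N1
  proof -
    have "N1 \<subseteq> topspace (subtopology X Y)" using net that unfolding network_def by blast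
    then show ?thesis by simp
  qed
  have netp: "\<exists>N1\<in>N. z \<in> N1 \<and> N1 \<subseteq> Uy" if "openin (subtopology X Y) Uy" "z \<in> Uy" for Uy z
    using net that unfolding network_def by blast
  have ns: "\<And>S T. closedin X S \<Longrightarrow> closedin X T \<Longrightarrow> disjnt S T \<Longrightarrow>
      \<exists>U V. openin X U \<and> openin X V \<and> S \<subseteq> U \<and> T \<subseteq> V \<and> disjnt U V"
    using nor unfolding normal_space_def by blast
  have na: "\<And>S U. closedin X S \<Longrightarrow> openin X U \<Longrightarrow> S \<subseteq> U \<Longrightarrow>
      \<exists>V. openin X V \<and> S \<subseteq> V \<and> X closure_of V \<subseteq> U"
    using nor unfolding normal_space_alt by blast
  have main: "\<exists>N1\<in>N. \<exists>N2\<in>N. x \<in> N1 \<and> y \<in> N2 \<and> (\<exists>U. Q (N1,N2) U)"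
    if xy: "x \<in> Y" "y \<in> Y" "x \<noteq> y" for x y
  proof -
    have cx: "closedin X {x}" and cy: "closedin X {y}"
      using t1 xy Ysub closedin_t1_singleton by (meson subsetD)+
    have "disjnt {x} {y}" using xy by auto
    obtain V0 W0 where VW0: "openin X V0" "openin X W0" "{x} \<subseteq> V0" "{y} \<subseteq> W0" "disjnt V0 W0"
      using ns[OF cx cy \<open>disjnt {x} {y}\<close>] by blast
    obtain V where V: "openin X V" "{x} \<subseteq> V" "X closure_of V \<subseteq> V0"
      using na[OF cx VW0(1,3)] by blast
    obtain Wy where Wy: "openin X Wy" "{y} \<subseteq> Wy" "X closure_of Wy \<subseteq> W0"
      using na[OF cy VW0(2,4)] by blast
    have "openin (subtopology X Y) (Y \<inter> V)" using V by (auto simp: openin_subtopology)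
    then obtain N1 where N1: "N1 \<in> N" "x \<in> N1" "N1 \<subseteq> Y \<inter> V"
      using netp xy V by blast
    have "openin (subtopology X Y) (Y \<inter> Wy)" using Wy by (auto simp: openin_subtopology)
    then obtain N2 where N2: "N2 \<in> N" "y \<in> N2" "N2 \<subseteq> Y \<inter> Wy"
      using netp xy Wy by blast
    have c1: "X closure_of N1 \<subseteq> V0" using closure_of_mono[of N1 V X] N1 V by auto
    have c2: "X closure_of N2 \<subseteq> W0" using closure_of_mono[of N2 Wy X] N2 Wy by auto
    have o1: "openin X (topspace X - X closure_of N2)" by (simp add: openin_diff closedin_closure_of)
    have s1: "X closure_of N1 \<subseteq> topspace X - X closure_of N2"
    proof
      fix z assume z: "z \<in> X closure_of N1"
      then have "z \<in> V0" using c1 by blast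
      then have "z \<notin> W0" using VW0(5) by (meson disjnt_iff)
      then have "z \<notin> X closure_of N2" using c2 by blast
      moreover have "z \<in> topspace X" using z closure_of_subset_topspace by fastforce
      ultimately show "z \<in> topspace X - X closure_of N2" by blast
    qed
    obtain U where U: "openin X U" "X closure_of N1 \<subseteq> U"
        "X closure_of U \<subseteq> topspace X - X closure_of N2"
      using na[OF closedin_closure_of o1 s1] by blast
    have "Q (N1,N2) U" unfolding Q_def fst_conv snd_conv disjnt_def using U(1,2,3) by blast
    then show ?thesis using N1 N2 by blast
  qed
  show ?thesis
  proof (cases "N = {}")
    case True
    have "Y = {}"
    proof (rule ccontr)
      assume "Y \<noteq> {}"
      then obtain x where "x \<in> Y" by blast
      moreover have "openin (subtopology X Y) (topspace (subtopology X Y))" by (rule openin_topspace)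
      moreover have "x \<in> topspace (subtopology X Y)" using \<open>x \<in> Y\<close> Ysub by auto
      ultimately show False using netp True by blast
    qed
    then show ?thesis unfolding F_tau_embedded_def F_separates_def
      by (intro exI[of _ "\<lambda>i. {}"]) (auto simp: point_finite_def)
  next
    case False
    have "(card_of (N \<times> N), card_of (T \<times> N)) \<in> ordLeq" by (rule card_of_Times_mono1[OF cN])
    moreover have "(card_of (T \<times> N), card_of (T \<times> T)) \<in> ordLeq" by (rule card_of_Times_mono2[OF cN])
    moreover have "(card_of (T \<times> T), card_of T) \<in> ordIso" by (rule card_of_Times_same_infinite[OF infT])
    ultimately have "(card_of (N \<times> N), card_of T) \<in> ordLeq"
      by (meson ordLeq_transitive ordLeq_ordIso_trans)
    moreover have "N \<times> N \<noteq> {}" using False by auto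
    ultimately obtain g where g: "g ` T = N \<times> N" using card_of_ordLeq2 by metis
    define A where "A i = {U. U = W (g i) \<and> Q (g i) U}" for i
    show ?thesis unfolding F_tau_embedded_def
    proof (intro exI[of _ A] conjI ballI)
      fix i assume "i \<in> T"
      show "openin X U" if "U \<in> A i" for U using that unfolding A_def Q_def by auto
      show "point_finite X (A i)" unfolding point_finite_def
      proof
        fix x
        have "A i \<subseteq> {W (g i)}" unfolding A_def by auto
        then have "{U \<in> A i. x \<in> U} \<subseteq> {W (g i)}" by blast
        then show "finite {U \<in> A i. x \<in> U}" using finite_subset by blast
      qed
    next
      show "F_separates X (\<Union>i\<in>T. A i) Y" unfolding F_separates_def
      proof (intro ballI impI)
        fix x y assume xy: "x \<in> Y" "y \<in> Y" "x \<noteq> y"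
        then obtain N1 N2 U where NN: "N1\<in>N" "N2\<in>N" "x \<in> N1" "y \<in> N2" "Q (N1,N2) U"
          using main by blast
        obtain i where i: "i \<in> T" "g i = (N1,N2)" using g NN(1,2)
          by (metis SigmaI imageE)
        have QW: "Q (N1,N2) (W (N1,N2))" unfolding W_def using NN(5) by (rule someI)
        have inA: "W (N1,N2) \<in> A i" unfolding A_def using i QW by auto
        have "x \<in> X closure_of N1" using closure_of_subset[of N1 X] NN NY Ysub by blast
        then have xW: "x \<in> W (N1,N2)" using QW unfolding Q_def by auto
        have "y \<in> X closure_of N2" using closure_of_subset[of N2 X] NN NY Ysub by blast
        then have yW: "y \<notin> X closure_of W (N1,N2)" using QW unfolding Q_def disjnt_def by auto
        show "\<exists>V\<in>(\<Union>i\<in>T. A i). x \<in> V \<and> y \<notin> X closure_of V \<or> y \<in> V \<and> x \<notin> X closure_of V"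
          using inA i xW yW by blast
      qed
    qed
  qed
qed

theorem theorem4p8:
  fixes X :: "'a topology" and Y :: "'a set" and T :: "'i set"
  assumes "t0_space X"
    and "Y \<subseteq> topspace X"
    and "(normal_space X \<and> t1_space X \<and> infinite T \<and> nw_le (subtopology X Y) T)
         \<or> (preopen X Y \<and>
            (\<exists>\<alpha> :: 'i \<Rightarrow> 'a set set.
               (\<forall>i \<in> T. (\<forall>U \<in> \<alpha> i. openin (subtopology X Y) U) \<and> strongly_point_finite (\<alpha> i)) \<and>
               F_separates (subtopology X Y) (\<Union>i \<in> T. \<alpha> i) Y))"
  shows "F_tau_embedded X Y T"
  using assms(3)
proof
  assume "normal_space X \<and> t1_space X \<and> infinite T \<and> nw_le (subtopology X Y) T"
  then show ?thesis using casea[OF assms(2)] by blast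
next
  assume "preopen X Y \<and>
            (\<exists>\<alpha> :: 'i \<Rightarrow> 'a set set.
               (\<forall>i \<in> T. (\<forall>U \<in> \<alpha> i. openin (subtopology X Y) U) \<and> strongly_point_finite (\<alpha> i)) \<and>
               F_separates (subtopology X Y) (\<Union>i \<in> T. \<alpha> i) Y)"
  then show ?thesis using caseb[OF assms(2)] by blast
qed

end
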